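(* Let $n,k$ be integers with $2\le k<n$. Then $$\overline{\mathrm{dist}}_F(\mathcal{S}^{n,k},\mathcal{S}^n_+)\le \frac{n-k}{n+k-2}.$$
   Context: $\mathcal{S}^n_+$ denotes the cone of $n\times n$ real symmetric positive semidefinite (PSD) matrices. For integers $2\le k\le n$, the $k$-PSD closure $\mathcal{S}^{n,k}$ is the set of all $n\times n$ real symmetric matrices all of whose $k\times k$ principal submatrices are PSD. For a matrix $M$, $\mathrm{dist}_F(M,\mathcal{S}^n_+)=\inf_{N\in\mathcal{S}^n_+}\|M-N\|_F$, where $\|\cdot\|_F$ is the Frobenius norm. For a set $\mathcal{K}$ of $n\times n$ matrices, $\overline{\mathrm{dist}}_F(\mathcal{K},\mathcal{S}^n_+)=\sup_{M\in\mathcal{K},\ \|M\|_F=1}\mathrm{dist}_F(M,\mathcal{S}^n_+)$. *)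

theory Defs
  imports "HOL-Analysis.Analysis"
begin

text \<open>n x n real matrices are represented as real^'n^'n with n = CARD('n).\<close>

definition symmetric_mat :: "real^'n^'n \<Rightarrow> bool" where
  "symmetric_mat M \<longleftrightarrow> transpose M = M"

definition psd_cone :: "(real^'n^'n) set" where
  "psd_cone = {M. symmetric_mat M \<and> (\<forall>x. 0 \<le> x \<bullet> (M *v x))}"

definition principal_psd :: "'n set \<Rightarrow> real^'n^'n \<Rightarrow> bool" where
  "principal_psd I M \<longleftrightarrow> (\<forall>x::'n \<Rightarrow> real. 0 \<le> (\<Sum>i\<in>I. \<Sum>j\<in>I. x i * M $ i $ j * x j))"

definition k_psd_closure :: "nat \<Rightarrow> (real^'n^'n) set" where
  "k_psd_closure k = {M. symmetric_mat M \<and> (\<forall>I. card I = k \<longrightarrow> principal_psd I M)}"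

definition frob_norm :: "real^'n^'n \<Rightarrow> real" where
  "frob_norm M = sqrt (\<Sum>i\<in>UNIV. \<Sum>j\<in>UNIV. (M $ i $ j)^2)"

definition dist_F_psd :: "real^'n^'n \<Rightarrow> real" where
  "dist_F_psd M = (INF N\<in>psd_cone. frob_norm (M - N))"

definition sup_dist_F_psd :: "(real^'n^'n) set \<Rightarrow> real" where
  "sup_dist_F_psd K = (SUP M\<in>{M\<in>K. frob_norm M = 1}. dist_F_psd M)"

end

theory Submission
  imports Defs
begin

lemma count_same:
  fixes i :: "'n::finite"
  assumes "1 \<le> k"
  shows "card {I::'n set. card I = k \<and> i \<in> I} = (CARD('n) - 1) choose (k - 1)"
proof -
  have eq: "{I::'n set. card I = k \<and> i \<in> I} = insert i ` {B. B \<subseteq> - {i} \<and> card B = k - 1}"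
  proof (rule set_eqI, rule iffI)
    fix I :: "'n set" assume "I \<in> {I. card I = k \<and> i \<in> I}"
    hence h: "card I = k" "i \<in> I" by auto
    have "I = insert i (I - {i})" using h by auto
    moreover have "card (I - {i}) = k - 1" using h by (simp add: card_Diff_singleton)
    ultimately show "I \<in> insert i ` {B. B \<subseteq> - {i} \<and> card B = k - 1}" by blast
  next
    fix I :: "'n set" assume "I \<in> insert i ` {B. B \<subseteq> - {i} \<and> card B = k - 1}"
    then obtain B where B: "B \<subseteq> - {i}" "card B = k - 1" "I = insert i B" by auto
    have "i \<notin> B" using B by auto
    hence "card I = k" using B assms by (simp add: card_insert_disjoint)
    thus "I \<in> {I. card I = k \<and> i \<in> I}" using B by auto
  qed
  have inj: "inj_on (insert i) {B. B \<subseteq> - {i} \<and> card B = k - 1}"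
    by (rule inj_onI) (auto simp: insert_ident)
  have "card {I::'n set. card I = k \<and> i \<in> I} = card {B. B \<subseteq> - {i} \<and> card B = k - 1}"
    unfolding eq by (rule card_image[OF inj])
  also have "\<dots> = card (- {i}) choose (k - 1)" by (rule n_subsets) simp
  also have "card (- {i} :: 'n set) = CARD('n) - 1"
    by (simp add: Compl_eq_Diff_UNIV card_Diff_singleton)
  finally show ?thesis .
qed

lemma count_pair:
  fixes i j :: "'n::finite"
  assumes "2 \<le> k" "i \<noteq> j"
  shows "card {I::'n set. card I = k \<and> i \<in> I \<and> j \<in> I} = (CARD('n) - 2) choose (k - 2)"
proof -
  let ?f = "\<lambda>B. insert i (insert j B)"
  have eq: "{I::'n set. card I = k \<and> i \<in> I \<and> j \<in> I} = ?f ` {B. B \<subseteq> - {i, j} \<and> card B = k - 2}"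
  proof (rule set_eqI, rule iffI)
    fix I :: "'n set" assume "I \<in> {I. card I = k \<and> i \<in> I \<and> j \<in> I}"
    hence h: "card I = k" "i \<in> I" "j \<in> I" by auto
    have "I = ?f (I - {i, j})" using h by auto
    moreover have "card (I - {i, j}) = k - 2" using h assms by (simp add: card_Diff_subset)
    ultimately show "I \<in> ?f ` {B. B \<subseteq> - {i, j} \<and> card B = k - 2}" by blast
  next
    fix I :: "'n set" assume "I \<in> ?f ` {B. B \<subseteq> - {i, j} \<and> card B = k - 2}"
    then obtain B where B: "B \<subseteq> - {i, j}" "card B = k - 2" "I = ?f B" by auto
    have "i \<notin> B" "j \<notin> B" using B by auto
    hence "card I = k" using B assms by (simp add: card_insert_disjoint)
    thus "I \<in> {I. card I = k \<and> i \<in> I \<and> j \<in> I}" using B by auto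
  qed
  have inj: "inj_on ?f {B. B \<subseteq> - {i, j} \<and> card B = k - 2}"
  proof (rule inj_onI)
    fix A B assume "A \<in> {B. B \<subseteq> - {i, j} \<and> card B = k - 2}" "B \<in> {B. B \<subseteq> - {i, j} \<and> card B = k - 2}" "?f A = ?f B"
    thus "A = B" by blast
  qed
  have "card {I::'n set. card I = k \<and> i \<in> I \<and> j \<in> I} = card {B. B \<subseteq> - {i, j} \<and> card B = k - 2}"
    unfolding eq by (rule card_image[OF inj])
  also have "\<dots> = card (- {i, j}) choose (k - 2)" by (rule n_subsets) simp
  also have "card (- {i, j} :: 'n set) = CARD('n) - 2"
    using assms by (simp add: Compl_eq_Diff_UNIV card_Diff_subset)
  finally show ?thesis .
qed

lemma sum_subsets:
  fixes g :: "'n::finite \<Rightarrow> 'n \<Rightarrow> real"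
  shows "(\<Sum>I\<in>{I::'n set. card I = k}. \<Sum>i\<in>I. \<Sum>j\<in>I. g i j)
       = (\<Sum>i\<in>UNIV. \<Sum>j\<in>UNIV. g i j * real (card {I::'n set. card I = k \<and> i \<in> I \<and> j \<in> I}))"
proof -
  let ?S = "{I::'n set. card I = k}"
  have "(\<Sum>I\<in>?S. \<Sum>i\<in>I. \<Sum>j\<in>I. g i j) = (\<Sum>I\<in>?S. \<Sum>i\<in>UNIV. \<Sum>j\<in>UNIV. if i \<in> I \<and> j \<in> I then g i j else 0)"
  proof (rule sum.cong[OF refl])
    fix I :: "'n set"
    have "(\<Sum>i\<in>I. \<Sum>j\<in>I. g i j) = (\<Sum>i\<in>UNIV. if i \<in> I then (\<Sum>j\<in>I. g i j) else 0)"
      by (simp add: sum.If_cases)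
    also have "\<dots> = (\<Sum>i\<in>UNIV. \<Sum>j\<in>UNIV. if i \<in> I \<and> j \<in> I then g i j else 0)"
      by (rule sum.cong[OF refl]) (simp add: sum.If_cases)
    finally show "(\<Sum>i\<in>I. \<Sum>j\<in>I. g i j) = (\<Sum>i\<in>UNIV. \<Sum>j\<in>UNIV. if i \<in> I \<and> j \<in> I then g i j else 0)" .
  qed
  also have "\<dots> = (\<Sum>i\<in>UNIV. \<Sum>I\<in>?S. \<Sum>j\<in>UNIV. if i \<in> I \<and> j \<in> I then g i j else 0)"
    by (rule sum.swap)
  also have "\<dots> = (\<Sum>i\<in>UNIV. \<Sum>j\<in>UNIV. \<Sum>I\<in>?S. if i \<in> I \<and> j \<in> I then g i j else 0)"
    by (rule sum.cong[OF refl]) (rule sum.swap)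
  also have "\<dots> = (\<Sum>i\<in>UNIV. \<Sum>j\<in>UNIV. g i j * real (card {I::'n set. card I = k \<and> i \<in> I \<and> j \<in> I}))"
  proof (intro sum.cong[OF refl])
    fix i j :: 'n
    have "(\<Sum>I\<in>?S. if i \<in> I \<and> j \<in> I then g i j else 0) = (\<Sum>I\<in>{I\<in>?S. i \<in> I \<and> j \<in> I}. g i j)"
      by (rule sum.inter_filter[symmetric]) simp
    also have "\<dots> = g i j * real (card {I::'n set. card I = k \<and> i \<in> I \<and> j \<in> I})"
      by simp
    finally show "(\<Sum>I\<in>?S. if i \<in> I \<and> j \<in> I then g i j else 0) = g i j * real (card {I::'n set. card I = k \<and> i \<in> I \<and> j \<in> I})" .
  qed
  finally show ?thesis .
qed


lemma sym_entry:
  assumes "symmetric_mat (M::real^'n^'n)"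
  shows "M $ j $ i = M $ i $ j"
proof -
  have "transpose M $ i $ j = M $ i $ j" using assms by (simp add: symmetric_mat_def)
  thus ?thesis by (simp add: transpose_def)
qed

lemma split_form:
  fixes g :: "'n::finite \<Rightarrow> 'n \<Rightarrow> real"
  shows "(\<Sum>i\<in>UNIV. \<Sum>j\<in>UNIV. (if i = j then a else b) * g i j)
     = a * (\<Sum>i\<in>UNIV. g i i) + b * (\<Sum>i\<in>UNIV. \<Sum>j\<in>UNIV. if i = j then 0 else g i j)"
proof -
  have "(\<Sum>i\<in>UNIV. \<Sum>j\<in>UNIV. (if i = j then a else b) * g i j)
     = (\<Sum>i\<in>UNIV. a * (\<Sum>j\<in>UNIV. if i = j then g i j else 0) + b * (\<Sum>j\<in>UNIV. if i = j then 0 else g i j))"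
  proof (rule sum.cong[OF refl])
    fix i
    have "(\<Sum>j\<in>UNIV. (if i = j then a else b) * g i j) = (\<Sum>j\<in>UNIV. a * (if i = j then g i j else 0) + b * (if i = j then 0 else g i j))"
      by (rule sum.cong) auto
    thus "(\<Sum>j\<in>UNIV. (if i = j then a else b) * g i j) = a * (\<Sum>j\<in>UNIV. if i = j then g i j else 0) + b * (\<Sum>j\<in>UNIV. if i = j then 0 else g i j)"
      by (simp only: sum.distrib sum_distrib_left)
  qed
  also have "\<dots> = (\<Sum>i\<in>UNIV. a * g i i + b * (\<Sum>j\<in>UNIV. if i = j then 0 else g i j))"
    by (rule sum.cong[OF refl]) (simp add: sum.delta)
  also have "\<dots> = a * (\<Sum>i\<in>UNIV. g i i) + b * (\<Sum>i\<in>UNIV. \<Sum>j\<in>UNIV. if i = j then 0 else g i j)"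
    by (simp add: sum.distrib sum_distrib_left)
  finally show ?thesis .
qed

lemma key_ineq:
  fixes M :: "real^'n^'n"
  assumes M: "M \<in> k_psd_closure k" and k: "2 \<le> k" "k < CARD('n)"
  shows "0 \<le> real (CARD('n) - 1) * (\<Sum>i\<in>UNIV. x i * M $ i $ i * x i)
            + real (k - 1) * (\<Sum>i\<in>UNIV. \<Sum>j\<in>UNIV. if i = j then 0 else x i * M $ i $ j * x j)"
proof -
  let ?n = "CARD('n)"
  define a where "a = real ((?n - 1) choose (k - 1))"
  define b where "b = real ((?n - 2) choose (k - 2))"
  define Dp where "Dp = (\<Sum>i\<in>UNIV. x i * M $ i $ i * x i)"
  define Op where "Op = (\<Sum>i\<in>UNIV. \<Sum>j\<in>UNIV. if i = j then 0 else x i * M $ i $ j * x j)"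
  have "0 \<le> (\<Sum>I\<in>{I::'n set. card I = k}. \<Sum>i\<in>I. \<Sum>j\<in>I. x i * M $ i $ j * x j)"
    using M by (rule_tac sum_nonneg) (simp add: k_psd_closure_def principal_psd_def)
  also have "\<dots> = (\<Sum>i\<in>UNIV. \<Sum>j\<in>UNIV. x i * M $ i $ j * x j * real (card {I::'n set. card I = k \<and> i \<in> I \<and> j \<in> I}))"
    by (rule sum_subsets)
  also have "\<dots> = (\<Sum>i\<in>UNIV. \<Sum>j\<in>UNIV. (if i = j then a else b) * (x i * M $ i $ j * x j))"
    using count_same[of k] count_pair[of k] k unfolding a_def b_def
    by (intro sum.cong refl) auto
  also have "\<dots> = a * Dp + b * Op" unfolding Dp_def Op_def by (rule split_form)
  finally have h: "0 \<le> a * Dp + b * Op" .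
  have ab: "real (k - 1) * a = real (?n - 1) * b"
  proof -
    have "Suc (k - 2) * ((?n - 1) choose Suc (k - 2)) = (?n - 1) * ((?n - 1 - 1) choose (k - 2))"
      by (rule binomial_absorption)
    moreover have "Suc (k - 2) = k - 1" "?n - 1 - 1 = ?n - 2" using k by auto
    ultimately have "(k - 1) * ((?n - 1) choose (k - 1)) = (?n - 1) * ((?n - 2) choose (k - 2))" by simp
    hence "real ((k - 1) * ((?n - 1) choose (k - 1))) = real ((?n - 1) * ((?n - 2) choose (k - 2)))" by simp
    thus ?thesis unfolding a_def b_def by simp
  qed
  have bpos: "b > 0" unfolding b_def using k by simp
  have "0 \<le> real (k - 1) * (a * Dp + b * Op)" using h by simp
  also have "real (k - 1) * (a * Dp + b * Op) = (real (k - 1) * a) * Dp + b * real (k - 1) * Op"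
    by (simp add: algebra_simps)
  also have "\<dots> = (real (?n - 1) * b) * Dp + b * real (k - 1) * Op"
    by (simp only: ab)
  also have "\<dots> = b * (real (?n - 1) * Dp + real (k - 1) * Op)"
    by (simp add: algebra_simps)
  finally have "0 \<le> b * (real (?n - 1) * Dp + real (k - 1) * Op)" .
  hence "0 \<le> real (?n - 1) * Dp + real (k - 1) * Op" using bpos by (simp add: zero_le_mult_iff)
  thus ?thesis unfolding Dp_def Op_def .
qed


lemma aux2: "(2 * p / (d::real)) * D + (2 * q / d) * E = 2 / d * (p * D + q * E)"
  by (cases "d = 0") (simp_all add: field_simps)

lemma frob_nonneg: "0 \<le> frob_norm M"
  unfolding frob_norm_def by (simp add: sum_nonneg)

theorem theorem1:
  fixes k :: nat
  assumes "2 \<le> k" and "k < CARD('n::finite)"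
  shows "sup_dist_F_psd (k_psd_closure k :: (real^'n^'n) set)
           \<le> (real CARD('n) - real k) / (real CARD('n) + real k - 2)"
proof -
  let ?n = "CARD('n)"
  define t where "t = (real ?n - real k) / (real ?n + real k - 2)"
  have den: "real ?n + real k - 2 > 0" using assms by linarith
  have t0: "0 \<le> t" unfolding t_def using assms den by simp
  have t1: "1 + t = 2 * real (?n - 1) / (real ?n + real k - 2)"
    unfolding t_def using den assms by (simp add: field_simps of_nat_diff)
  have t2: "1 - t = 2 * real (k - 1) / (real ?n + real k - 2)"
    unfolding t_def using den assms by (simp add: field_simps of_nat_diff)
  define Z where "Z = {M\<in>(k_psd_closure k :: (real^'n^'n) set). frob_norm M = 1}"
  have ne: "Z \<noteq> {}"
  proof -
    define M0 :: "real^'n^'n" where "M0 = (\<chi> i j. if i = j then 1 / sqrt (real ?n) else 0)"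
    have "symmetric_mat M0" unfolding symmetric_mat_def M0_def transpose_def
      by (simp add: vec_eq_iff)
    moreover have "principal_psd I M0" for I
      unfolding principal_psd_def M0_def
      by (intro allI sum_nonneg) simp
    moreover have "frob_norm M0 = 1"
    proof -
      have "(\<Sum>i\<in>UNIV. \<Sum>j\<in>UNIV. (M0 $ i $ j)^2) = (\<Sum>i\<in>(UNIV::'n set). 1 / real ?n)"
      proof -
        have "(M0 $ i $ j)^2 = (if i = j then 1 / real ?n else 0)" for i j
          by (simp add: M0_def power_divide)
        thus ?thesis by (simp add: sum.delta)
      qed
      also have "\<dots> = 1" by simp
      finally show ?thesis unfolding frob_norm_def by simp
    qed
    ultimately have "M0 \<in> Z" unfolding Z_def k_psd_closure_def by simp
    thus ?thesis by auto
  qed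
  have bound: "dist_F_psd M \<le> t" if MZ: "M \<in> Z" for M
  proof -
    have Mc: "M \<in> k_psd_closure k" and fM: "frob_norm M = 1" using MZ unfolding Z_def by auto
    have sym: "symmetric_mat M" using Mc unfolding k_psd_closure_def by simp
    define N :: "real^'n^'n" where "N = (\<chi> i j. if i = j then (1 + t) * M $ i $ j else (1 - t) * M $ i $ j)"
    have symN: "symmetric_mat N" unfolding symmetric_mat_def N_def transpose_def
      using sym_entry[OF sym] by (simp add: vec_eq_iff)
    have formN: "0 \<le> x \<bullet> (N *v x)" for x
    proof -
      define Dp where "Dp = (\<Sum>i\<in>UNIV. x $ i * M $ i $ i * x $ i)"
      define Op where "Op = (\<Sum>i\<in>UNIV. \<Sum>j\<in>UNIV. if i = j then 0 else x $ i * M $ i $ j * x $ j)"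
      have "x \<bullet> (N *v x) = (\<Sum>i\<in>UNIV. \<Sum>j\<in>UNIV. (if i = j then 1 + t else 1 - t) * (x $ i * M $ i $ j * x $ j))"
        unfolding inner_vec_def matrix_vector_mult_def N_def
        by (simp add: sum_distrib_left algebra_simps cong: if_cong) (intro sum.cong refl, auto simp: algebra_simps)
      also have "\<dots> = (1 + t) * Dp + (1 - t) * Op" unfolding Dp_def Op_def by (rule split_form)
      also have "\<dots> = 2 / (real ?n + real k - 2) * (real (?n - 1) * Dp + real (k - 1) * Op)"
        unfolding t1 t2 by (rule aux2)
      finally have e: "x \<bullet> (N *v x) = 2 / (real ?n + real k - 2) * (real (?n - 1) * Dp + real (k - 1) * Op)" .
      have "0 \<le> real (?n - 1) * Dp + real (k - 1) * Op"
        unfolding Dp_def Op_def using key_ineq[OF Mc assms, of "\<lambda>i. x $ i"] by simp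
      thus ?thesis unfolding e using den by simp
    qed
    have Npsd: "N \<in> psd_cone" unfolding psd_cone_def using symN formN by simp
    have fr: "frob_norm (M - N) = t"
    proof -
      have "(\<Sum>i\<in>UNIV. \<Sum>j\<in>UNIV. ((M - N) $ i $ j)^2) = (\<Sum>i\<in>UNIV. \<Sum>j\<in>UNIV. t^2 * (M $ i $ j)^2)"
        unfolding N_def by (intro sum.cong refl) (simp add: power2_eq_square algebra_simps)
      also have "\<dots> = t^2 * (\<Sum>i\<in>UNIV. \<Sum>j\<in>UNIV. (M $ i $ j)^2)" by (simp add: sum_distrib_left)
      finally have "frob_norm (M - N) = sqrt (t^2) * frob_norm M"
        unfolding frob_norm_def by (simp add: real_sqrt_mult)
      thus ?thesis using fM t0 by simp
    qed
    have "dist_F_psd M \<le> frob_norm (M - N)"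
      unfolding dist_F_psd_def
      by (rule cINF_lower[OF _ Npsd]) (auto intro: bdd_belowI[where m=0] simp: frob_nonneg)
    thus ?thesis using fr by simp
  qed
  have "sup_dist_F_psd (k_psd_closure k :: (real^'n^'n) set) \<le> t"
    unfolding sup_dist_F_psd_def Z_def[symmetric]
    by (rule cSUP_least[OF ne bound])
  thus ?thesis unfolding t_def .
qed

end
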